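(* For every $\mu\in\rho+P_\kappa$ we have $$\sum_{\lambda\in\rho+P_\kappa}\gamma(\lambda)\,|J(\lambda,\mu)|^2=\kappa\,(n+\kappa)^{n-1}.$$
   Context: Let $n\ge1$ and $\kappa\ge1$ be integers. Let $P:=\big(\bigoplus_{i=1}^n\mathbb Z\epsilon_i\big)/\big(\mathbb Z\sum_{i=1}^n\epsilon_i\big)$, with the bilinear form $(\cdot|\cdot):P\times P\to\mathbb Z[1/n]$ determined by $(\epsilon_i|\epsilon_j)=\delta_{ij}-\frac1n$. Let $R_+:=\{\epsilon_i-\epsilon_j: 1\le i<j\le n\}$, $\theta:=\epsilon_1-\epsilon_n$, $\rho:=\sum_{i=1}^n(n-i)\epsilon_i$, $P_+:=\{\lambda\in P:(\alpha|\lambda)\ge0\ \forall\alpha\in R_+\}$ and $P_\kappa:=\{\lambda\in P_+:(\theta|\lambda)\le\kappa\}$. The symmetric group $W=S_n$ acts on $P$ by permuting the $\epsilon_i$. For $\lambda,\mu\in P$ set $$J(\lambda,\mu):=\sum_{w\in W}\mathrm{sign}(w)\exp\Big(\frac{2\pi i}{n+\kappa}(w(\lambda)|\mu)\Big).$$ Every $\lambda\in P$ has a unique representative $\sum_i\lambda_i\epsilon_i$ with $\lambda_n=0$; with respect to this representative set $\gamma(\lambda):=\kappa+n-1-\lambda_1$. *)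

theory Defs
  imports "HOL-Analysis.Analysis" "HOL-Combinatorics.Permutations"
begin

text \<open>Elements of P are represented by integer coefficient vectors
  lam :: nat => int, where lam i is the coefficient of epsilon_(i+1), i < n
  (indices are 0-based; coordinates at i >= n are ignored/zero).\<close>

definition eps :: "nat \<Rightarrow> nat \<Rightarrow> int" where
  "eps i = (\<lambda>j. if j = i then 1 else 0)"

definition form :: "nat \<Rightarrow> (nat \<Rightarrow> int) \<Rightarrow> (nat \<Rightarrow> int) \<Rightarrow> real" where
  "form n x y = (\<Sum>i<n. \<Sum>j<n. real_of_int (x i) * real_of_int (y j) *
                   ((if i = j then 1 else 0) - 1 / real n))"

text \<open>rho = sum_i (n - i) eps_i (1-based), i.e. coefficient n-1-i at 0-based index i.\<close>
definition rho :: "nat \<Rightarrow> nat \<Rightarrow> int" where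
  "rho n = (\<lambda>i. if i < n then int n - 1 - int i else 0)"

text \<open>Normalised representatives: coefficient of eps_n is 0 (and junk coordinates are 0).\<close>
definition normrep :: "nat \<Rightarrow> (nat \<Rightarrow> int) set" where
  "normrep n = {lam. \<forall>i. n - 1 \<le> i \<longrightarrow> lam i = 0}"

text \<open>P_kappa, described through normalised representatives:
  (alpha|lam) >= 0 for all positive roots alpha = eps_i - eps_j (i<j), and (theta|lam) <= kappa.\<close>
definition Pkappa :: "nat \<Rightarrow> nat \<Rightarrow> (nat \<Rightarrow> int) set" where
  "Pkappa n \<kappa> = {lam \<in> normrep n.
      (\<forall>i j. i < j \<and> j < n \<longrightarrow> form n (\<lambda>k. eps i k - eps j k) lam \<ge> 0) \<and>
      form n (\<lambda>k. eps 0 k - eps (n - 1) k) lam \<le> real \<kappa>}"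

definition rhoPkappa :: "nat \<Rightarrow> nat \<Rightarrow> (nat \<Rightarrow> int) set" where
  "rhoPkappa n \<kappa> = (\<lambda>nu. \<lambda>i. rho n i + nu i) ` Pkappa n \<kappa>"

definition Wact :: "(nat \<Rightarrow> nat) \<Rightarrow> (nat \<Rightarrow> int) \<Rightarrow> nat \<Rightarrow> int" where
  "Wact w lam = (\<lambda>j. lam (inv w j))"

definition J :: "nat \<Rightarrow> nat \<Rightarrow> (nat \<Rightarrow> int) \<Rightarrow> (nat \<Rightarrow> int) \<Rightarrow> complex" where
  "J n \<kappa> lam mu = (\<Sum>w\<in>{w. w permutes {..<n}}.
      of_int (sign w) * exp (2 * pi * \<i> / of_nat (n + \<kappa>) * of_real (form n (Wact w lam) mu)))"

text \<open>gamma(lam) = kappa + n - 1 - lam_1 for the representative with lam_n = 0.\<close>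
definition gamma :: "nat \<Rightarrow> nat \<Rightarrow> (nat \<Rightarrow> int) \<Rightarrow> int" where
  "gamma n \<kappa> lam = int \<kappa> + int n - 1 - lam 0"

end

theory Submission
  imports Defs
begin

definition ee :: "nat \<Rightarrow> int \<Rightarrow> complex" where
  "ee N m = exp (2 * of_real pi * \<i> * of_int m / of_nat N)"

lemma ee_add: "ee N (a + b) = ee N a * ee N b"
  unfolding ee_def by (simp add: exp_add[symmetric] add_divide_distrib distrib_left distrib_right)

lemma ee_zero[simp]: "ee N 0 = 1"
  unfolding ee_def by simp

lemma norm_ee[simp]: "norm (ee N a) = 1"
  unfolding ee_def by (simp add: norm_exp_eq_Re)

lemma cnj_ee: "cnj (ee N a) = ee N (- a)"
  unfolding ee_def by (simp add: exp_cnj)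

lemma ee_eq_1: assumes "N > 0" shows "ee N d = 1 \<longleftrightarrow> int N dvd d"
proof -
  have "ee N d = 1 \<longleftrightarrow> (\<exists>m::int. 2 * pi * d / N = real_of_int (2 * m) * pi)"
    unfolding ee_def exp_eq_1 by (simp add: Im_divide_of_nat)
  also have "\<dots> \<longleftrightarrow> (\<exists>m::int. d = N * m)"
  proof -
    have "\<And>m::int. 2 * pi * d / N = real_of_int (2 * m) * pi \<longleftrightarrow> real_of_int d = real N * m"
      using assms pi_gt_zero by (auto simp: field_simps)
    then show ?thesis by (metis of_int_eq_iff of_int_mult of_int_of_nat_eq)
  qed
  finally show ?thesis by (auto simp: dvd_def)
qed

lemma ee_pow: "ee N (int x * d) = (ee N d) ^ x"
  by (induction x) (auto simp: ee_add distrib_right)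

lemma ee_geom: assumes "N > 0"
  shows "(\<Sum>x\<in>{0..<int N}. ee N (x * d)) = (if int N dvd d then of_nat N else 0)"
proof -
  have "{0..<int N} = int ` {..<N}" by (auto simp: image_iff intro!: bexI[of _ "nat _"])
  then have "(\<Sum>x\<in>{0..<int N}. ee N (x * d)) = (\<Sum>x<N. (ee N d) ^ x)"
    by (simp add: sum.reindex ee_pow)
  also have "\<dots> = (if int N dvd d then of_nat N else 0)"
  proof (cases "int N dvd d")
    case True then show ?thesis using ee_eq_1[OF assms] by (simp add: sum_gp_strict)
  next
    case False
    have "(ee N d) ^ N = 1" unfolding ee_pow[symmetric]
      using ee_eq_1[OF assms, of "int N * d"] by simp
    then show ?thesis using False ee_eq_1[OF assms] by (simp add: sum_gp_strict)
  qed
  finally show ?thesis .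
qed


definition SS :: "nat \<Rightarrow> nat \<Rightarrow> (nat \<Rightarrow> int) \<Rightarrow> (nat \<Rightarrow> int) \<Rightarrow> complex" where
  "SS n N mu t = (\<Sum>\<sigma>\<in>{\<sigma>. \<sigma> permutes {..<n}}. of_int (sign \<sigma>) * (\<Prod>i<n. ee N (t i * mu (\<sigma> i))))"

definition DD :: "nat \<Rightarrow> nat \<Rightarrow> (nat \<Rightarrow> int) \<Rightarrow> (nat \<Rightarrow> int) \<Rightarrow> real" where
  "DD n N mu t = (cmod (SS n N mu t))^2"

lemma perm_fin: "p permutes {..<(n::nat)} \<Longrightarrow> permutation p"
  using permutes_imp_permutation[of "{..<n}" p] by simp

lemma SS_cong: "(\<And>i. i < n \<Longrightarrow> t i = t' i) \<Longrightarrow> SS n N mu t = SS n N mu t'"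
  unfolding SS_def by (intro sum.cong refl arg_cong2[where f="(*)"] prod.cong) (auto simp del: of_int_mult)

lemma SS_perm: assumes p: "\<pi> permutes {..<n}"
  shows "SS n N mu (t \<circ> \<pi>) = of_int (sign \<pi>) * SS n N mu t"
proof -
  have "SS n N mu (t \<circ> \<pi>) = (\<Sum>\<sigma>\<in>{\<sigma>. \<sigma> permutes {..<n}}. of_int (sign (\<sigma> \<circ> \<pi>)) * (\<Prod>i<n. ee N (t (\<pi> i) * mu ((\<sigma> \<circ> \<pi>) i))))"
    unfolding SS_def by (subst sum_permutations_compose_right[OF p]) simp
  also have "\<dots> = (\<Sum>\<sigma>\<in>{\<sigma>. \<sigma> permutes {..<n}}. of_int (sign \<pi>) * (of_int (sign \<sigma>) * (\<Prod>i<n. ee N (t i * mu (\<sigma> i)))))"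
  proof (rule sum.cong[OF refl])
    fix \<sigma> assume "\<sigma> \<in> {\<sigma>. \<sigma> permutes {..<n}}"
    then have s: "\<sigma> permutes {..<n}" by simp
    have "(\<Prod>i<n. ee N (t (\<pi> i) * mu ((\<sigma> \<circ> \<pi>) i))) = (\<Prod>i<n. ee N (t i * mu (\<sigma> i)))"
      using prod.permute[OF p, of "\<lambda>i. ee N (t i * mu (\<sigma> i))"] by (simp add: comp_def)
    moreover have "sign (\<sigma> \<circ> \<pi>) = sign \<sigma> * sign \<pi>"
      using sign_compose[OF perm_fin[OF s] perm_fin[OF p]] .
    ultimately show "of_int (sign (\<sigma> \<circ> \<pi>)) * (\<Prod>i<n. ee N (t (\<pi> i) * mu ((\<sigma> \<circ> \<pi>) i))) =
         of_int (sign \<pi>) * (of_int (sign \<sigma>) * (\<Prod>i<n. ee N (t i * mu (\<sigma> i))))"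
      by simp
  qed
  also have "\<dots> = of_int (sign \<pi>) * SS n N mu t"
    unfolding SS_def by (simp add: sum_distrib_left)
  finally show ?thesis .
qed

lemma sign_abs: "\<bar>sign p\<bar> = 1"
  by (simp add: sign_def)

lemma DD_perm: assumes p: "\<pi> permutes {..<n}" and "\<And>i. i < n \<Longrightarrow> t' i = t (\<pi> i)"
  shows "DD n N mu t' = DD n N mu t"
proof -
  have "SS n N mu t' = SS n N mu (t \<circ> \<pi>)" using assms(2) by (intro SS_cong) auto
  also have "\<dots> = of_int (sign \<pi>) * SS n N mu t" by (rule SS_perm[OF p])
  finally have "cmod (SS n N mu t') = cmod (SS n N mu t)"
    by (simp add: norm_mult sign_def split: if_splits)
  then show ?thesis unfolding DD_def by simp
qed

lemma SS_noninj: assumes "i < n" "j < n" "i \<noteq> j" "t i = t j"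
  shows "SS n N mu t = 0"
proof -
  let ?p = "Transposition.transpose i j"
  have p: "?p permutes {..<n}" using assms by (intro permutes_swap_id) auto
  have "SS n N mu t = SS n N mu (t \<circ> ?p)"
    using assms by (intro SS_cong) (simp add: Transposition.transpose_def)
  also have "\<dots> = - SS n N mu t" using SS_perm[OF p] assms(3) by (simp add: sign_swap_id)
  finally show ?thesis by simp
qed

lemma DD_noninj: "\<not> inj_on t {..<n} \<Longrightarrow> DD n N mu t = 0"
  unfolding inj_on_def DD_def using SS_noninj by fastforce

lemma DD_shift: assumes "\<And>i. i < n \<Longrightarrow> t' i = t i + c"
  shows "DD n N mu t' = DD n N mu t"
proof -
  let ?K = "\<Prod>i<n. ee N (c * mu i)"
  have "SS n N mu t' = ?K * SS n N mu t"
    unfolding SS_def sum_distrib_left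
  proof (rule sum.cong[OF refl])
    fix \<sigma> assume "\<sigma> \<in> {\<sigma>. \<sigma> permutes {..<n}}"
    then have s: "\<sigma> permutes {..<n}" by simp
    have "(\<Prod>i<n. ee N (t' i * mu (\<sigma> i))) = (\<Prod>i<n. ee N (t i * mu (\<sigma> i)) * ee N (c * mu (\<sigma> i)))"
      using assms by (intro prod.cong) (auto simp: ee_add[symmetric] algebra_simps)
    also have "\<dots> = (\<Prod>i<n. ee N (t i * mu (\<sigma> i))) * (\<Prod>i<n. ee N (c * mu (\<sigma> i)))"
      by (rule prod.distrib)
    also have "(\<Prod>i<n. ee N (c * mu (\<sigma> i))) = ?K"
      using prod.permute[OF s, of "\<lambda>i. ee N (c * mu i)"] by (simp add: comp_def)
    finally show "of_int (sign \<sigma>) * (\<Prod>i<n. ee N (t' i * mu (\<sigma> i))) =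
          ?K * (of_int (sign \<sigma>) * (\<Prod>i<n. ee N (t i * mu (\<sigma> i))))" by simp
  qed
  moreover have "cmod ?K = 1" by (simp add: prod_norm[symmetric])
  ultimately show ?thesis unfolding DD_def by (simp add: norm_mult)
qed


lemma DD_expand:
  "of_real (DD n N mu t) = (\<Sum>\<sigma>\<in>{\<sigma>. \<sigma> permutes {..<n}}. \<Sum>\<tau>\<in>{\<sigma>. \<sigma> permutes {..<n}}.
      of_int (sign \<sigma> * sign \<tau>) * (\<Prod>i<n. ee N (t i * (mu (\<sigma> i) - mu (\<tau> i)))))"
proof -
  have c: "cnj (SS n N mu t) = (\<Sum>\<tau>\<in>{\<sigma>. \<sigma> permutes {..<n}}. of_int (sign \<tau>) * (\<Prod>i<n. ee N (- (t i * mu (\<tau> i)))))"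
    unfolding SS_def by (simp add: cnj_sum cnj_prod cnj_ee)
  have e: "of_real (DD n N mu t) = SS n N mu t * cnj (SS n N mu t)"
    unfolding DD_def by (rule complex_norm_square)
  show ?thesis
    unfolding e
    unfolding c
    unfolding SS_def sum_product
  proof (intro sum.cong refl)
    fix \<sigma> \<tau>
    have "(\<Prod>i<n. ee N (t i * mu (\<sigma> i))) * (\<Prod>i<n. ee N (- (t i * mu (\<tau> i)))) =
          (\<Prod>i<n. ee N (t i * (mu (\<sigma> i) - mu (\<tau> i))))"
      by (simp add: prod.distrib[symmetric] ee_add[symmetric] algebra_simps)
    then show "of_int (sign \<sigma>) * (\<Prod>i<n. ee N (t i * mu (\<sigma> i))) *
         (of_int (sign \<tau>) * (\<Prod>i<n. ee N (- (t i * mu (\<tau> i))))) =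
         of_int (sign \<sigma> * sign \<tau>) * (\<Prod>i<n. ee N (t i * (mu (\<sigma> i) - mu (\<tau> i))))"
      by (simp add: algebra_simps)
  qed
qed

lemma DD_sum_PiE: assumes "\<And>i. i < n \<Longrightarrow> finite (B i)"
  shows "(\<Sum>t\<in>PiE {..<n} B. of_real (DD n N mu t)) =
    (\<Sum>\<sigma>\<in>{\<sigma>. \<sigma> permutes {..<n}}. \<Sum>\<tau>\<in>{\<sigma>. \<sigma> permutes {..<n}}.
      of_int (sign \<sigma> * sign \<tau>) * (\<Prod>i<n. \<Sum>x\<in>B i. ee N (x * (mu (\<sigma> i) - mu (\<tau> i)))))"
proof -
  have L: "(\<Sum>t\<in>PiE {..<n} B. of_real (DD n N mu t)) =
    (\<Sum>\<sigma>\<in>{\<sigma>. \<sigma> permutes {..<n}}. \<Sum>\<tau>\<in>{\<sigma>. \<sigma> permutes {..<n}}.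
      of_int (sign \<sigma> * sign \<tau>) * (\<Sum>t\<in>PiE {..<n} B. (\<Prod>i<n. ee N (t i * (mu (\<sigma> i) - mu (\<tau> i))))))"
    unfolding DD_expand
    by (subst sum.swap) (simp add: sum.swap[of _ _ "PiE {..<n} B"] sum_distrib_left)
  show ?thesis
    unfolding L
    by (intro sum.cong refl arg_cong2[where f="(*)"] prod_sum_PiE[symmetric]) (use assms in auto)
qed


definition muok :: "nat \<Rightarrow> nat \<Rightarrow> (nat \<Rightarrow> int) \<Rightarrow> bool" where
  "muok n N mu \<longleftrightarrow> (\<forall>i<n. 0 \<le> mu i \<and> mu i < int N) \<and> inj_on mu {..<n}"

lemma perm_eq_on: assumes "\<sigma> permutes S" "\<tau> permutes S" "\<And>i. i \<in> S \<Longrightarrow> \<sigma> i = \<tau> i"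
  shows "\<sigma> = \<tau>"
proof
  fix x show "\<sigma> x = \<tau> x"
    using assms by (cases "x \<in> S") (auto simp: permutes_not_in)
qed

lemma perm_eq_but_one: assumes s: "\<sigma> permutes {..<n}" and t: "\<tau> permutes {..<n}" and k: "k < n"
  and eq: "\<And>i. i < n \<Longrightarrow> i \<noteq> k \<Longrightarrow> \<sigma> i = \<tau> i"
  shows "\<sigma> = \<tau>"
proof -
  have "\<tau> k \<in> {..<n}" using permutes_in_image[OF t] k by simp
  then obtain j where j: "j < n" "\<sigma> j = \<tau> k"
    using permutes_image[OF s] by (metis imageE lessThan_iff)
  have "j = k"
  proof (rule ccontr)
    assume "j \<noteq> k"
    then have "\<tau> j = \<tau> k" using eq[OF j(1)] j(2) by simp
    then show False using permutes_inj[OF t] \<open>j \<noteq> k\<close> by (simp add: inj_eq)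
  qed
  show ?thesis
  proof (rule perm_eq_on[OF s t])
    fix i assume "i \<in> {..<n}"
    then show "\<sigma> i = \<tau> i" using eq j \<open>j = k\<close> by (cases "i = k") auto
  qed
qed

lemma inner_sum: assumes N: "N > 0" and mu: "muok n N mu" and s: "\<sigma> permutes {..<n}"
  and t: "\<tau> permutes {..<n}" and i: "i < n"
  shows "(\<Sum>x\<in>{0..<int N}. ee N (x * (mu (\<sigma> i) - mu (\<tau> i)))) = (if \<sigma> i = \<tau> i then of_nat N else 0)"
proof -
  have si: "\<sigma> i < n" "\<tau> i < n" using i permutes_in_image[OF s] permutes_in_image[OF t] by auto
  have "int N dvd (mu (\<sigma> i) - mu (\<tau> i)) \<longleftrightarrow> \<sigma> i = \<tau> i"
  proof
    assume d: "int N dvd (mu (\<sigma> i) - mu (\<tau> i))"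
    have "0 \<le> mu (\<sigma> i)" "mu (\<sigma> i) < int N" "0 \<le> mu (\<tau> i)" "mu (\<tau> i) < int N"
      using mu si unfolding muok_def by auto
    then have "\<bar>mu (\<sigma> i) - mu (\<tau> i)\<bar> < int N" by linarith
    then have "mu (\<sigma> i) - mu (\<tau> i) = 0" using dvd_imp_le_int[OF _ d] by fastforce
    then show "\<sigma> i = \<tau> i" using mu si unfolding muok_def inj_on_def by auto
  qed simp
  then show ?thesis using ee_geom[OF N] by simp
qed

lemma F_all: assumes N: "N > 0" and mu: "muok n N mu"
  shows "(\<Sum>t\<in>PiE {..<n} (\<lambda>_. {0..<int N}). DD n N mu t) = fact n * real N ^ n"
proof -
  have "(\<Sum>t\<in>PiE {..<n} (\<lambda>_. {0..<int N}). (of_real (DD n N mu t) :: complex)) =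
    (\<Sum>\<sigma>\<in>{\<sigma>. \<sigma> permutes {..<n}}. \<Sum>\<tau>\<in>{\<sigma>. \<sigma> permutes {..<n}}.
      of_int (sign \<sigma> * sign \<tau>) * (if \<sigma> = \<tau> then of_nat N ^ n else 0))"
  proof -
    have "(\<Prod>i<n. \<Sum>x\<in>{0..<int N}. ee N (x * (mu (\<sigma> i) - mu (\<tau> i)))) = (if \<sigma> = \<tau> then of_nat N ^ n else 0)"
      if s: "\<sigma> permutes {..<n}" and t: "\<tau> permutes {..<n}" for \<sigma> \<tau>
    proof -
      have "(\<Prod>i<n. \<Sum>x\<in>{0..<int N}. ee N (x * (mu (\<sigma> i) - mu (\<tau> i)))) = (\<Prod>i<n. if \<sigma> i = \<tau> i then of_nat N else 0)"
        using inner_sum[OF N mu s t] by simp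
      also have "\<dots> = (if \<sigma> = \<tau> then of_nat N ^ n else 0)"
      proof (cases "\<sigma> = \<tau>")
        case False
        then obtain i where "i < n" "\<sigma> i \<noteq> \<tau> i" using perm_eq_on[OF s t] by auto
        then show ?thesis using False by (intro trans[OF prod_zero]) auto
      qed simp
      finally show ?thesis .
    qed
    note P = this
    show ?thesis apply (subst DD_sum_PiE) using P by (auto intro!: sum.cong)
  qed
  also have "\<dots> = (\<Sum>\<sigma>\<in>{\<sigma>. \<sigma> permutes {..<n}}. of_nat N ^ n)"
  proof (intro sum.cong refl)
    fix \<sigma> assume "\<sigma> \<in> {\<sigma>. \<sigma> permutes {..<n}}"
    have sq: "(of_int (sign \<sigma>) * of_int (sign \<sigma>) :: complex) = 1" by (simp add: sign_def)
    then show "(\<Sum>\<tau>\<in>{\<sigma>. \<sigma> permutes {..<n}}. of_int (sign \<sigma> * sign \<tau>) * (if \<sigma> = \<tau> then of_nat N ^ n else 0)) = (of_nat N ^ n :: complex)"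

    proof -
      have "(\<Sum>\<tau>\<in>{\<sigma>. \<sigma> permutes {..<n}}. of_int (sign \<sigma> * sign \<tau>) * (if \<sigma> = \<tau> then of_nat N ^ n else 0)) =
        (\<Sum>\<tau>\<in>{\<sigma>. \<sigma> permutes {..<n}}. if \<tau> = \<sigma> then of_int (sign \<sigma>) * of_int (sign \<sigma>) * of_nat N ^ n else (0::complex))"
        by (intro sum.cong) auto
      also have "\<dots> = of_nat N ^ n" using \<open>\<sigma> \<in> _\<close> sq by (simp add: sum.delta finite_permutations)
      finally show ?thesis .
    qed
  qed
  also have "\<dots> = of_real (fact n * real N ^ n)"
    by (simp add: card_permutations)
  finally show ?thesis by (metis of_real_eq_iff of_real_sum)
qed

lemma F_k: assumes N: "N > 0" and mu: "muok n N mu" and k: "k < n"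
  shows "(\<Sum>t\<in>PiE {..<n} (\<lambda>i. if i = k then {0} else {0..<int N}). DD n N mu t) = fact n * real N ^ (n - 1)"
proof -
  have "(\<Sum>t\<in>PiE {..<n} (\<lambda>i. if i = k then {0} else {0..<int N}). (of_real (DD n N mu t) :: complex)) =
    (\<Sum>\<sigma>\<in>{\<sigma>. \<sigma> permutes {..<n}}. \<Sum>\<tau>\<in>{\<sigma>. \<sigma> permutes {..<n}}.
      of_int (sign \<sigma> * sign \<tau>) * (if \<sigma> = \<tau> then of_nat N ^ (n - 1) else 0))"
  proof -
    have "(\<Prod>i<n. \<Sum>x\<in>(if i = k then {0} else {0..<int N}). ee N (x * (mu (\<sigma> i) - mu (\<tau> i)))) = (if \<sigma> = \<tau> then of_nat N ^ (n - 1) else 0)"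
      if s: "\<sigma> permutes {..<n}" and t: "\<tau> permutes {..<n}" for \<sigma> \<tau>
    proof -
      have "(\<Prod>i<n. \<Sum>x\<in>(if i = k then {0} else {0..<int N}). ee N (x * (mu (\<sigma> i) - mu (\<tau> i)))) = (\<Prod>i<n. if i = k then 1 else if \<sigma> i = \<tau> i then of_nat N else 0)"
        using inner_sum[OF N mu s t] by (intro prod.cong) auto
      also have "\<dots> = (if \<sigma> = \<tau> then of_nat N ^ (n - 1) else 0)"
      proof (cases "\<sigma> = \<tau>")
        case False
        then obtain i where "i < n" "i \<noteq> k" "\<sigma> i \<noteq> \<tau> i" using perm_eq_but_one[OF s t k] by auto
        then show ?thesis using False by (intro trans[OF prod_zero]) auto
      next
        case True
        have "(\<Prod>i<n. if i = k then 1 else of_nat N) = (1::complex) * (\<Prod>i\<in>{..<n} - {k}. of_nat N)"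
          using k by (subst prod.remove[of _ k]) (auto intro!: prod.cong)
        also have "\<dots> = of_nat N ^ (n - 1)" using k by simp
        moreover have "(\<Prod>i<n. if i = k then 1 else if \<sigma> i = \<tau> i then of_nat N else 0) = (\<Prod>i<n. if i = k then 1 else (of_nat N :: complex))"
          using True by (intro prod.cong) auto
        ultimately show ?thesis using True by simp
      qed
      finally show ?thesis .
    qed
    note P = this
    show ?thesis apply (subst DD_sum_PiE) using P by (auto intro!: sum.cong)
  qed
  also have "\<dots> = (\<Sum>\<sigma>\<in>{\<sigma>. \<sigma> permutes {..<n}}. of_nat N ^ (n - 1))"
  proof (intro sum.cong refl)
    fix \<sigma> assume "\<sigma> \<in> {\<sigma>. \<sigma> permutes {..<n}}"
    have sq: "(of_int (sign \<sigma>) * of_int (sign \<sigma>) :: complex) = 1" by (simp add: sign_def)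
    then show "(\<Sum>\<tau>\<in>{\<sigma>. \<sigma> permutes {..<n}}. of_int (sign \<sigma> * sign \<tau>) * (if \<sigma> = \<tau> then of_nat N ^ (n - 1) else 0)) = (of_nat N ^ (n - 1) :: complex)"
    proof -
      have "(\<Sum>\<tau>\<in>{\<sigma>. \<sigma> permutes {..<n}}. of_int (sign \<sigma> * sign \<tau>) * (if \<sigma> = \<tau> then of_nat N ^ (n - 1) else 0)) =
        (\<Sum>\<tau>\<in>{\<sigma>. \<sigma> permutes {..<n}}. if \<tau> = \<sigma> then of_int (sign \<sigma>) * of_int (sign \<sigma>) * of_nat N ^ (n - 1) else (0::complex))"
        by (intro sum.cong) auto
      also have "\<dots> = of_nat N ^ (n - 1)" using \<open>\<sigma> \<in> _\<close> sq by (simp add: sum.delta finite_permutations)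
      finally show ?thesis .
    qed
  qed
  also have "\<dots> = of_real (fact n * real N ^ (n - 1))"
    by (simp add: card_permutations)
  finally have "(of_real (\<Sum>t\<in>PiE {..<n} (\<lambda>i. if i = k then {0} else {0..<int N}). DD n N mu t) :: complex) = of_real (fact n * real N ^ (n - 1))"
    by (simp add: of_real_sum)
  then show ?thesis by (simp only: of_real_eq_iff)
qed


definition Alls :: "nat \<Rightarrow> nat \<Rightarrow> (nat \<Rightarrow> int) set" where
  "Alls n N = PiE {..<n} (\<lambda>_. {0..<int N})"

definition Decs :: "nat \<Rightarrow> nat \<Rightarrow> (nat \<Rightarrow> int) set" where
  "Decs n N = {s \<in> Alls n N. \<forall>i j. i < j \<and> j < n \<longrightarrow> s j < s i}"

definition Injs :: "nat \<Rightarrow> nat \<Rightarrow> (nat \<Rightarrow> int) set" where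
  "Injs n N = {t \<in> Alls n N. inj_on t {..<n}}"

lemma finite_Alls[simp]: "finite (Alls n N)"
  unfolding Alls_def by (intro finite_PiE) auto

lemma dec_inj: fixes s :: "nat \<Rightarrow> int" assumes "\<forall>i j. i < j \<and> j < n \<longrightarrow> s j < s i" shows "inj_on s {..<n}"
proof (rule inj_onI)
  fix i j assume "i \<in> {..<n}" "j \<in> {..<n}" "s i = s j"
  then show "i = j" using assms by (metis less_irrefl lessThan_iff nat_neq_iff)
qed

lemma dec_above: fixes s :: "nat \<Rightarrow> int" assumes d: "\<forall>i j. i < j \<and> j < n \<longrightarrow> s j < s i" and i: "i < n"
  shows "card {x \<in> s ` {..<n}. s i < x} = i"
proof -
  have "{x \<in> s ` {..<n}. s i < x} = s ` {..<i}"
  proof (intro equalityI subsetI)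
    fix x assume "x \<in> {x \<in> s ` {..<n}. s i < x}"
    then obtain j where j: "j < n" "x = s j" "s i < s j" by auto
    have "j < i"
    proof (rule ccontr)
      assume "\<not> j < i"
      then have "j = i \<or> i < j" by auto
      then show False using d[rule_format, of i j] j by auto
    qed
    then show "x \<in> s ` {..<i}" using j by auto
  next
    fix x assume "x \<in> s ` {..<i}"
    then show "x \<in> {x \<in> s ` {..<n}. s i < x}" using d i by auto
  qed
  moreover have "inj_on s {..<i}" using dec_inj[OF d] i by (meson inj_on_subset lessThan_subset_iff less_imp_le_nat)
  ultimately show ?thesis by (simp add: card_image)
qed

lemma dec_unique: fixes s s' :: "nat \<Rightarrow> int" assumes d: "\<forall>i j. i < j \<and> j < n \<longrightarrow> s j < s i"
  and d': "\<forall>i j. i < j \<and> j < n \<longrightarrow> s' j < s' i"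
  and im: "s ` {..<n} = s' ` {..<n}" and i: "i < n"
  shows "s i = s' i"
proof -
  have "s i \<in> s ` {..<n}" using i by simp
  then have "s i \<in> s' ` {..<n}" using im by simp
  then obtain k where k: "k < n" "s i = s' k" by auto
  have "i = k" using dec_above[OF d i] dec_above[OF d' k(1)] im k(2) by simp
  then show ?thesis using k by simp
qed

lemma sort_exists: assumes t: "t \<in> Injs n N"
  shows "\<exists>s \<pi>. s \<in> Decs n N \<and> \<pi> permutes {..<n} \<and> t = restrict (s \<circ> \<pi>) {..<n}"
proof -
  have tA: "t \<in> Alls n N" and ti: "inj_on t {..<n}" using t unfolding Injs_def by auto
  define X where "X = t ` {..<n}"
  have cX: "card X = n" unfolding X_def using ti by (simp add: card_image)
  have fX: "finite X" unfolding X_def by simp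
  define S where "S = sorted_list_of_set X"
  define L where "L = rev S"
  have lS: "length S = n" unfolding S_def using cX by simp
  have lL: "length L = n" unfolding L_def using lS by simp
  have sL: "set L = X" unfolding L_def S_def using fX by simp
  have dL: "distinct L" unfolding L_def S_def by simp
  have sortS: "sorted_wrt (<) S" unfolding S_def by (rule strict_sorted_list_of_set)
  define s where "s = restrict (\<lambda>i. L ! i) {..<n}"
  have Lrange: "L ! i \<in> {0..<int N}" if "i < n" for i
  proof -
    have "L ! i \<in> set L" using that lL by simp
    then have "L ! i \<in> X" using sL by simp
    then obtain j where "j < n" "L ! i = t j" unfolding X_def by auto
    then show ?thesis using tA unfolding Alls_def by (auto simp: PiE_iff)
  qed
  have sD: "s \<in> Decs n N"
    unfolding Decs_def Alls_def
  proof (intro CollectI conjI allI impI)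
    show "s \<in> {..<n} \<rightarrow>\<^sub>E {0..<int N}" unfolding s_def using Lrange by auto
    fix i j assume ij: "i < j \<and> j < n"
    have "S ! (n - Suc j) < S ! (n - Suc i)"
      using sorted_wrt_nth_less[OF sortS, of "n - Suc j" "n - Suc i"] ij lS by auto
    then show "s j < s i" unfolding s_def L_def using ij lS by (simp add: rev_nth)
  qed
  define \<pi> where "\<pi> = (\<lambda>i. if i < n then (THE k. k < n \<and> L ! k = t i) else i)"
  have pi: "\<pi> i < n \<and> L ! (\<pi> i) = t i" if "i < n" for i
  proof -
    have "t i \<in> set L" using sL that unfolding X_def by auto
    then have "\<exists>!k. k < length L \<and> L ! k = t i" using distinct_Ex1[OF dL] by blast
    then have "(THE k. k < n \<and> L ! k = t i) < n \<and> L ! (THE k. k < n \<and> L ! k = t i) = t i"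
      using lL by (metis (mono_tags, lifting) theI)
    then show ?thesis unfolding \<pi>_def using that by simp
  qed
  have injp: "inj_on \<pi> {..<n}"
  proof (rule inj_onI)
    fix i j assume "i \<in> {..<n}" "j \<in> {..<n}" "\<pi> i = \<pi> j"
    then have "t i = t j" using pi by (metis lessThan_iff)
    then show "i = j" using ti \<open>i \<in> _\<close> \<open>j \<in> _\<close> by (meson inj_onD)
  qed
  have imp: "\<pi> ` {..<n} = {..<n}"
    by (rule endo_inj_surj) (use pi injp in auto)
  have pp: "\<pi> permutes {..<n}"
  proof (rule bij_imp_permutes)
    show "bij_betw \<pi> {..<n} {..<n}" unfolding bij_betw_def using injp imp by blast
  qed (simp add: \<pi>_def)
  have "t = restrict (s \<circ> \<pi>) {..<n}"
  proof
    fix i show "t i = restrict (s \<circ> \<pi>) {..<n} i"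
    proof (cases "i < n")
      case True then show ?thesis using pi[OF True] by (simp add: s_def)
    next
      case False
      have "t i = undefined" using tA False unfolding Alls_def by (meson PiE_arb lessThan_iff)
      then show ?thesis using False by simp
    qed
  qed
  then show ?thesis using sD pp by blast
qed


lemma Alls_out: "t \<in> Alls n N \<Longrightarrow> \<not> i < n \<Longrightarrow> t i = undefined"
  unfolding Alls_def by (meson PiE_arb lessThan_iff)

lemma Alls_ext: assumes "t \<in> Alls n N" "t' \<in> Alls n N" "\<And>i. i < n \<Longrightarrow> t i = t' i"
  shows "t = t'"
proof
  fix i show "t i = t' i"
  proof (cases "i < n")
    case False then show ?thesis using Alls_out[OF assms(1)] Alls_out[OF assms(2)] by metis
  qed (use assms in auto)
qed

lemma Decs_Alls: "s \<in> Decs n N \<Longrightarrow> s \<in> Alls n N"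
  unfolding Decs_def by blast

lemma Decs_dec: "s \<in> Decs n N \<Longrightarrow> i < j \<Longrightarrow> j < n \<Longrightarrow> s j < s i"
  unfolding Decs_def by blast

lemma Decs_decall: "s \<in> Decs n N \<Longrightarrow> \<forall>i j. i < j \<and> j < n \<longrightarrow> s j < s i"
  unfolding Decs_def by blast

lemma sum_Injs_Decs:
  "(\<Sum>t\<in>{t \<in> Injs n N. P (t ` {..<n})}. DD n N mu t) = fact n * (\<Sum>s\<in>{s \<in> Decs n N. P (s ` {..<n})}. DD n N mu s)"
proof -
  let ?G = "\<lambda>(s, \<pi>). restrict (s \<circ> \<pi>) {..<n}"
  let ?Ds = "{s \<in> Decs n N. P (s ` {..<n})}"
  let ?Ps = "{\<pi>. \<pi> permutes {..<n}}"
  have img: "restrict (s \<circ> \<pi>) {..<n} ` {..<n} = s ` {..<n}" if "\<pi> permutes {..<n}" for s :: "nat \<Rightarrow> int" and \<pi>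
  proof -
    have "restrict (s \<circ> \<pi>) {..<n} ` {..<n} = (s \<circ> \<pi>) ` {..<n}" by (rule image_cong) auto
    also have "\<dots> = s ` (\<pi> ` {..<n})" by (rule image_comp[symmetric])
    finally have "restrict (s \<circ> \<pi>) {..<n} ` {..<n} = s ` (\<pi> ` {..<n})" .
    then show ?thesis using permutes_image[OF that] by simp
  qed
  have inj: "inj_on ?G (?Ds \<times> ?Ps)"
  proof (rule inj_onI, clarify)
    fix s \<pi> s' \<pi>'
    assume s: "s \<in> Decs n N" and p: "\<pi> permutes {..<n}" and s': "s' \<in> Decs n N" and p': "\<pi>' permutes {..<n}"
      and eq: "restrict (s \<circ> \<pi>) {..<n} = restrict (s' \<circ> \<pi>') {..<n}"
    have "s ` {..<n} = s' ` {..<n}" using img[OF p, of s] img[OF p', of s'] eq by simp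
    then have si: "s i = s' i" if "i < n" for i
      using dec_unique[OF Decs_decall[OF s] Decs_decall[OF s'] _ that] by simp
    have "s = s'" using Alls_ext[OF Decs_Alls[OF s] Decs_Alls[OF s'] si] .
    moreover have "\<pi> = \<pi>'"
    proof (rule perm_eq_on[OF p p'])
      fix i assume i: "i \<in> {..<n}"
      have "s (\<pi> i) = s (\<pi>' i)" using fun_cong[OF eq, of i] i \<open>s = s'\<close> by simp
      moreover have "\<pi> i \<in> {..<n}" "\<pi>' i \<in> {..<n}" using i permutes_in_image[OF p] permutes_in_image[OF p'] by auto
      ultimately show "\<pi> i = \<pi>' i" using dec_inj[OF Decs_decall[OF s]] by (meson inj_onD)
    qed
    ultimately show "s = s' \<and> \<pi> = \<pi>'" by simp
  qed
  have im: "?G ` (?Ds \<times> ?Ps) = {t \<in> Injs n N. P (t ` {..<n})}"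
  proof (intro equalityI subsetI)
    fix t assume "t \<in> ?G ` (?Ds \<times> ?Ps)"
    then obtain s \<pi> where s: "s \<in> Decs n N" "P (s ` {..<n})" and p: "\<pi> permutes {..<n}"
      and t: "t = restrict (s \<circ> \<pi>) {..<n}" by auto
    have "\<pi> i < n" if "i < n" for i using permutes_in_image[OF p, of i] that by simp
    then have "t \<in> Alls n N" unfolding t using s(1) unfolding Decs_def Alls_def
      by (auto simp: PiE_iff)
    moreover have "inj_on t {..<n}"
    proof -
      have "inj_on (s \<circ> \<pi>) {..<n}"
        by (rule comp_inj_on[OF permutes_inj_on[OF p]]) (simp add: permutes_image[OF p] dec_inj[OF Decs_decall[OF s(1)]])
      then show ?thesis unfolding t by (simp add: inj_on_def)
    qed
    moreover have "P (t ` {..<n})" using img[OF p, of s] s(2) t by simp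
    ultimately show "t \<in> {t \<in> Injs n N. P (t ` {..<n})}" unfolding Injs_def by simp
  next
    fix t assume t: "t \<in> {t \<in> Injs n N. P (t ` {..<n})}"
    then obtain s \<pi> where s: "s \<in> Decs n N" and p: "\<pi> permutes {..<n}" and te: "t = restrict (s \<circ> \<pi>) {..<n}"
      using sort_exists by blast
    have "P (s ` {..<n})" using t img[OF p, of s] te by simp
    then show "t \<in> ?G ` (?Ds \<times> ?Ps)" using s p te by (auto intro!: image_eqI[of _ _ "(s, \<pi>)"])
  qed
  have "(\<Sum>t\<in>{t \<in> Injs n N. P (t ` {..<n})}. DD n N mu t) = (\<Sum>x\<in>?Ds \<times> ?Ps. DD n N mu (?G x))"
    unfolding im[symmetric] by (subst sum.reindex[OF inj]) (simp only: comp_def)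
  also have "\<dots> = (\<Sum>s\<in>?Ds. \<Sum>\<pi>\<in>?Ps. DD n N mu (restrict (s \<circ> \<pi>) {..<n}))"
    by (simp add: sum.cartesian_product prod.case_distrib[of "DD n N mu"])
  also have "\<dots> = (\<Sum>s\<in>?Ds. \<Sum>\<pi>\<in>?Ps. DD n N mu s)"
    by (intro sum.cong refl DD_perm) auto
  also have "\<dots> = (\<Sum>s\<in>?Ds. fact n * DD n N mu s)"
    by (simp add: card_permutations)
  finally show ?thesis by (simp add: sum_distrib_left)
qed


lemma form_eq: assumes "n \<ge> 1"
  shows "form n x y = (\<Sum>i<n. real_of_int (x i) * real_of_int (y i))
     - (\<Sum>i<n. real_of_int (x i)) * (\<Sum>j<n. real_of_int (y j)) / real n"
proof -
  have "form n x y = (\<Sum>i<n. \<Sum>j<n. (if i = j then real_of_int (x i) * real_of_int (y j) else 0)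
        - real_of_int (x i) * real_of_int (y j) / real n)"
    unfolding form_def by (intro sum.cong refl) (simp add: algebra_simps)
  also have "\<dots> = (\<Sum>i<n. real_of_int (x i) * real_of_int (y i)) - (\<Sum>i<n. \<Sum>j<n. real_of_int (x i) * real_of_int (y j)) / real n"
    by (simp add: sum_subtractf sum_divide_distrib)
  also have "(\<Sum>i<n. \<Sum>j<n. real_of_int (x i) * real_of_int (y j)) = (\<Sum>i<n. real_of_int (x i)) * (\<Sum>j<n. real_of_int (y j))"
    by (simp add: sum_product)
  finally show ?thesis .
qed

lemma form_root: assumes "n \<ge> 1" "i < n" "j < n"
  shows "form n (\<lambda>k. eps i k - eps j k) lam = real_of_int (lam i - lam j)"
proof -
  have "(\<Sum>k<n. real_of_int (eps i k - eps j k) * real_of_int (lam k)) = real_of_int (lam i) - real_of_int (lam j)"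
    using assms by (simp add: eps_def left_diff_distrib sum_subtractf if_distrib[where f="\<lambda>x. real_of_int x * _"] cong: if_cong)
  moreover have "(\<Sum>k<n. real_of_int (eps i k - eps j k)) = 0"
    using assms by (simp add: eps_def sum_subtractf if_distrib[of real_of_int] sum.delta cong: if_cong)
  ultimately show ?thesis using form_eq[OF assms(1)] by simp
qed

lemma Pk_char: assumes n: "n \<ge> 1"
  shows "\<nu> \<in> Pkappa n \<kappa> \<longleftrightarrow> (\<forall>i. n - 1 \<le> i \<longrightarrow> \<nu> i = 0) \<and> (\<forall>i j. i < j \<and> j < n \<longrightarrow> \<nu> j \<le> \<nu> i)
     \<and> \<nu> 0 - \<nu> (n - 1) \<le> int \<kappa>"
proof -
  have a: "(\<forall>i j. i < j \<and> j < n \<longrightarrow> form n (\<lambda>k. eps i k - eps j k) \<nu> \<ge> 0) \<longleftrightarrow> (\<forall>i j. i < j \<and> j < n \<longrightarrow> \<nu> j \<le> \<nu> i)"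
  proof -
    have eq: "form n (\<lambda>k. eps i k - eps j k) \<nu> \<ge> 0 \<longleftrightarrow> \<nu> j \<le> \<nu> i" if "i < j" "j < n" for i j
      using form_root[OF n, of i j \<nu>] that by simp
    show ?thesis using eq by blast
  qed
  have b: "form n (\<lambda>k. eps 0 k - eps (n - 1) k) \<nu> \<le> real \<kappa> \<longleftrightarrow> \<nu> 0 - \<nu> (n - 1) \<le> int \<kappa>"
  proof -
    have "form n (\<lambda>k. eps 0 k - eps (n - 1) k) \<nu> = real_of_int (\<nu> 0 - \<nu> (n - 1))"
      by (rule form_root) (use n in auto)
    then show ?thesis by (metis of_int_le_iff of_int_of_nat_eq)
  qed
  show ?thesis unfolding Pkappa_def normrep_def using a b by auto
qed

lemma dec_gap: fixes s :: "nat \<Rightarrow> int"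
  assumes d: "\<forall>i j. i < j \<and> j < n \<longrightarrow> s j < s i" and "i \<le> j" "j < n"
  shows "s j + int (j - i) \<le> s i"
  using assms(2,3)
proof (induction j)
  case 0 then show ?case by simp
next
  case (Suc j)
  show ?case
  proof (cases "i = Suc j")
    case True then show ?thesis by simp
  next
    case False
    then have "i \<le> j" using Suc by simp
    then have "s j + int (j - i) \<le> s i" using Suc by simp
    moreover have "s (Suc j) < s j" using d Suc by simp
    ultimately show ?thesis using \<open>i \<le> j\<close> by (simp add: Suc_diff_le)
  qed
qed

lemma rhoP_char: assumes n: "n \<ge> 1"
  shows "lam \<in> rhoPkappa n \<kappa> \<longleftrightarrow> (\<forall>i. n \<le> i \<longrightarrow> lam i = 0) \<and> lam (n - 1) = 0 \<and>
     (\<forall>i<n. 0 \<le> lam i \<and> lam i < int (n + \<kappa>)) \<and> (\<forall>i j. i < j \<and> j < n \<longrightarrow> lam j < lam i)"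
proof
  assume "lam \<in> rhoPkappa n \<kappa>"
  then obtain \<nu> where nu: "\<nu> \<in> Pkappa n \<kappa>" and l: "lam = (\<lambda>i. rho n i + \<nu> i)"
    unfolding rhoPkappa_def by auto
  note P = nu[unfolded Pk_char[OF n]]
  have z: "\<forall>i. n \<le> i \<longrightarrow> lam i = 0" using P unfolding l rho_def by auto
  have z1: "lam (n - 1) = 0" using P n unfolding l rho_def by auto
  have d: "\<forall>i j. i < j \<and> j < n \<longrightarrow> lam j < lam i"
  proof (intro allI impI)
    fix i j assume ij: "i < j \<and> j < n"
    then have "\<nu> j \<le> \<nu> i" using P by blast
    then show "lam j < lam i" using ij unfolding l rho_def by simp
  qed
  have r: "\<forall>i<n. 0 \<le> lam i \<and> lam i < int (n + \<kappa>)"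
  proof (intro allI impI)
    fix i assume i: "i < n"
    have "lam (n - 1) \<le> lam i" using d i by (cases "i = n - 1") (auto intro: less_imp_le)
    moreover have "lam i \<le> lam 0" using d i by (cases "i = 0") (auto intro: less_imp_le)
    moreover have "lam 0 < int (n + \<kappa>)" using P n unfolding l rho_def by auto
    ultimately show "0 \<le> lam i \<and> lam i < int (n + \<kappa>)" using z1 by simp
  qed
  show "(\<forall>i. n \<le> i \<longrightarrow> lam i = 0) \<and> lam (n - 1) = 0 \<and>
     (\<forall>i<n. 0 \<le> lam i \<and> lam i < int (n + \<kappa>)) \<and> (\<forall>i j. i < j \<and> j < n \<longrightarrow> lam j < lam i)"
    using z z1 d r by blast
next
  assume A: "(\<forall>i. n \<le> i \<longrightarrow> lam i = 0) \<and> lam (n - 1) = 0 \<and>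
     (\<forall>i<n. 0 \<le> lam i \<and> lam i < int (n + \<kappa>)) \<and> (\<forall>i j. i < j \<and> j < n \<longrightarrow> lam j < lam i)"
  define \<nu> where "\<nu> = (\<lambda>i. lam i - rho n i)"
  have "\<nu> \<in> Pkappa n \<kappa>" unfolding Pk_char[OF n]
  proof (intro conjI allI impI)
    fix i assume "n - 1 \<le> i"
    then have "n \<le> i \<or> i = n - 1" by auto
    then show "\<nu> i = 0" using A n unfolding \<nu>_def rho_def by auto
  next
    fix i j assume ij: "i < j \<and> j < n"
    have "lam j + int (j - i) \<le> lam i" using dec_gap[of n lam i j] A ij by simp
    then show "\<nu> j \<le> \<nu> i" using ij unfolding \<nu>_def rho_def by simp
  next
    show "\<nu> 0 - \<nu> (n - 1) \<le> int \<kappa>" using A n unfolding \<nu>_def rho_def by auto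
  qed
  moreover have "lam = (\<lambda>i. rho n i + \<nu> i)" unfolding \<nu>_def by simp
  ultimately show "lam \<in> rhoPkappa n \<kappa>" unfolding rhoPkappa_def by blast
qed

lemma J_norm: assumes n: "n \<ge> 1"
  shows "cmod (J n \<kappa> lam mu) = cmod (SS n (n + \<kappa>) mu lam)"
proof -
  define N where "N = n + \<kappa>"
  have N0: "N > 0" using n unfolding N_def by simp
  define C where "C = (\<Sum>i<n. real_of_int (lam i)) * (\<Sum>j<n. real_of_int (mu j)) / real n"
  define E where "E = exp (- (2 * of_real pi * \<i> / of_nat N * of_real C))"
  have fw: "form n (Wact w lam) mu = (\<Sum>i<n. real_of_int (lam i * mu (w i))) - C"
    if w: "w permutes {..<n}" for w
  proof -
    have "(\<Sum>i<n. real_of_int (lam (inv w i)) * real_of_int (mu i)) = (\<Sum>i<n. real_of_int (lam (inv w (w i))) * real_of_int (mu (w i)))"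
      using sum.permute[OF w, of "\<lambda>i. real_of_int (lam (inv w i)) * real_of_int (mu i)"] by (simp add: comp_def)
    also have "\<dots> = (\<Sum>i<n. real_of_int (lam i * mu (w i)))"
      by (simp add: permutes_inverses(2)[OF w])
    finally have 1: "(\<Sum>i<n. real_of_int (lam (inv w i)) * real_of_int (mu i)) = (\<Sum>i<n. real_of_int (lam i * mu (w i)))" .
    have "(\<Sum>i<n. real_of_int (lam (inv w i))) = (\<Sum>i<n. real_of_int (lam (inv w (w i))))"
      using sum.permute[OF w, of "\<lambda>i. real_of_int (lam (inv w i))"] by (simp add: comp_def)
    also have "\<dots> = (\<Sum>i<n. real_of_int (lam i))"
      by (simp add: permutes_inverses(2)[OF w])
    finally have 2: "(\<Sum>i<n. real_of_int (lam (inv w i))) = (\<Sum>i<n. real_of_int (lam i))" .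
    show ?thesis unfolding form_eq[OF n] Wact_def 1 2 C_def ..
  qed
  have ew: "exp (of_real (2 * pi) * \<i> / of_nat N * of_real (form n (Wact w lam) mu)) = (\<Prod>i<n. ee N (lam i * mu (w i))) * E"
    if w: "w permutes {..<n}" for w
  proof -
    have "exp (of_real (2 * pi) * \<i> / of_nat N * of_real (form n (Wact w lam) mu)) =
      exp ((\<Sum>i<n. 2 * of_real pi * \<i> * of_int (lam i * mu (w i)) / of_nat N) + (- (2 * of_real pi * \<i> / of_nat N * of_real C)))"
      unfolding fw[OF w] by (simp add: sum_distrib_left sum_divide_distrib algebra_simps)
    also have "\<dots> = (\<Prod>i<n. ee N (lam i * mu (w i))) * E"
      unfolding exp_add E_def ee_def by (simp only: exp_sum[OF finite_lessThan])
    finally show ?thesis .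
  qed
  have "J n \<kappa> lam mu = SS n N mu lam * E"
    unfolding J_def SS_def sum_distrib_right N_def[symmetric]
  proof (intro sum.cong refl)
    fix w assume "w \<in> {w. w permutes {..<n}}"
    then have w: "w permutes {..<n}" by simp
    show "of_int (sign w) * exp (of_real (2 * pi) * \<i> / of_nat N * of_real (form n (Wact w lam) mu)) =
      of_int (sign w) * (\<Prod>i<n. ee N (lam i * mu (w i))) * E"
      unfolding ew[OF w] by (simp only: mult.assoc)
  qed
  moreover have "cmod E = 1"
    unfolding E_def by (simp add: norm_exp_eq_Re)
  ultimately show ?thesis by (simp add: norm_mult N_def)
qed


lemma count_Z: assumes N: "N > 0" and mu: "muok n N mu" and n: "n \<ge> 1"
  shows "(\<Sum>s\<in>{s \<in> Decs n N. 0 \<notin> s ` {..<n}}. DD n N mu s) = real N ^ n - real n * real N ^ (n - 1)"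
proof -
  let ?A = "Alls n N"
  let ?DD = "DD n N mu"
  have fin: "finite {t \<in> ?A. P t}" for P by simp
  have Inj_sub: "{t \<in> Injs n N. P t} \<subseteq> {t \<in> ?A. P t}" for P unfolding Injs_def by auto
  have red: "(\<Sum>t\<in>{t \<in> Injs n N. P t}. ?DD t) = (\<Sum>t\<in>{t \<in> ?A. P t}. ?DD t)" for P
    by (rule sum.mono_neutral_left[OF fin Inj_sub]) (use DD_noninj in \<open>auto simp: Injs_def\<close>)
  have 1: "fact n * (\<Sum>s\<in>{s \<in> Decs n N. 0 \<notin> s ` {..<n}}. ?DD s) = (\<Sum>t\<in>{t \<in> ?A. 0 \<notin> t ` {..<n}}. ?DD t)"
    using sum_Injs_Decs[where P="\<lambda>X. 0 \<notin> X" and n=n and N=N and mu=mu] red[of "\<lambda>t. 0 \<notin> t ` {..<n}"] by simp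
  have 2: "(\<Sum>t\<in>?A. ?DD t) = (\<Sum>t\<in>{t \<in> ?A. 0 \<notin> t ` {..<n}}. ?DD t) + (\<Sum>t\<in>{t \<in> ?A. 0 \<in> t ` {..<n}}. ?DD t)"
  proof -
    have "sum ?DD ?A = sum ?DD (?A \<inter> {t. 0 \<notin> t ` {..<n}}) + sum ?DD (?A - {t. 0 \<notin> t ` {..<n}})"
      by (rule sum.Int_Diff) simp
    moreover have "?A \<inter> {t. 0 \<notin> t ` {..<n}} = {t \<in> ?A. 0 \<notin> t ` {..<n}}" by blast
    moreover have "?A - {t. 0 \<notin> t ` {..<n}} = {t \<in> ?A. 0 \<in> t ` {..<n}}" by blast
    ultimately show ?thesis by simp
  qed
  have 3: "(\<Sum>t\<in>{t \<in> ?A. 0 \<in> t ` {..<n}}. ?DD t) = real n * (fact n * real N ^ (n - 1))"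
  proof -
    have "(\<Sum>t\<in>{t \<in> ?A. 0 \<in> t ` {..<n}}. ?DD t) = (\<Sum>t\<in>{t \<in> Injs n N. 0 \<in> t ` {..<n}}. ?DD t)"
      using red[of "\<lambda>t. 0 \<in> t ` {..<n}"] by simp
    also have "{t \<in> Injs n N. 0 \<in> t ` {..<n}} = (\<Union>k\<in>{..<n}. {t \<in> Injs n N. t k = 0})" by auto
    also have "(\<Sum>t\<in>(\<Union>k\<in>{..<n}. {t \<in> Injs n N. t k = 0}). ?DD t) = (\<Sum>k<n. \<Sum>t\<in>{t \<in> Injs n N. t k = 0}. ?DD t)"
    proof (rule sum.UNION_disjoint)
      show "\<forall>i\<in>{..<n}. \<forall>j\<in>{..<n}. i \<noteq> j \<longrightarrow> {t \<in> Injs n N. t i = 0} \<inter> {t \<in> Injs n N. t j = 0} = {}"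
        unfolding Injs_def inj_on_def by auto
    qed (auto simp: Injs_def)
    also have "\<dots> = (\<Sum>k<n. fact n * real N ^ (n - 1))"
    proof (rule sum.cong[OF refl])
      fix k assume k: "k \<in> {..<n}"
      have "(\<Sum>t\<in>{t \<in> Injs n N. t k = 0}. ?DD t) = (\<Sum>t\<in>{t \<in> ?A. t k = 0}. ?DD t)"
        using red[of "\<lambda>t. t k = 0"] by simp
      also have "{t \<in> ?A. t k = 0} = PiE {..<n} (\<lambda>i. if i = k then {0} else {0..<int N})"
      proof (intro equalityI subsetI)
        fix t assume t: "t \<in> {t \<in> ?A. t k = 0}"
        then have e: "t \<in> extensional {..<n}" and r: "\<forall>i\<in>{..<n}. t i \<in> {0..<int N}" and z: "t k = 0"
          unfolding Alls_def PiE_iff by auto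
        have "\<forall>i\<in>{..<n}. t i \<in> (if i = k then {0} else {0..<int N})"
          using r z by simp
        then show "t \<in> PiE {..<n} (\<lambda>i. if i = k then {0} else {0..<int N})"
          unfolding PiE_iff using e by blast
      next
        fix t assume t: "t \<in> PiE {..<n} (\<lambda>i. if i = k then {0} else {0..<int N})"
        then have e: "t \<in> extensional {..<n}" and r: "\<forall>i\<in>{..<n}. t i \<in> (if i = k then {0} else {0..<int N})"
          unfolding PiE_iff by auto
        have "t k \<in> (if k = k then {0} else {0..<int N})" using r k by (rule bspec)
        then have z: "t k = 0" by simp
        have "\<forall>i\<in>{..<n}. t i \<in> {0..<int N}"
        proof
          fix i assume i: "i \<in> {..<n}"
          show "t i \<in> {0..<int N}"
          proof (cases "i = k")
            case True then show ?thesis using z N by simp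
          next
            case False
            have "t i \<in> (if i = k then {0} else {0..<int N})" using r i by (rule bspec)
            then show ?thesis using False by simp
          qed
        qed
        then show "t \<in> {t \<in> ?A. t k = 0}" unfolding Alls_def PiE_iff using e z by blast
      qed
      also have "(\<Sum>t\<in>PiE {..<n} (\<lambda>i. if i = k then {0} else {0..<int N}). ?DD t) = fact n * real N ^ (n - 1)"
        using F_k[OF N mu] k by simp
      finally show "(\<Sum>t\<in>{t \<in> Injs n N. t k = 0}. ?DD t) = fact n * real N ^ (n - 1)" .
    qed
    also have "\<dots> = real n * (fact n * real N ^ (n - 1))" by simp
    finally show ?thesis .
  qed
  have 4: "(\<Sum>t\<in>?A. ?DD t) = fact n * real N ^ n" using F_all[OF N mu] unfolding Alls_def .
  have "fact n * (\<Sum>s\<in>{s \<in> Decs n N. 0 \<notin> s ` {..<n}}. ?DD s) = fact n * (real N ^ n - real n * real N ^ (n - 1))"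
    using 1 2 3 4 by (simp add: algebra_simps)
  then show ?thesis by simp
qed

lemma Decs_bounds: assumes s: "s \<in> Decs n N" and k: "k < n"
  shows "0 \<le> s k \<and> s k < int N \<and> s (n - 1) \<le> s k \<and> s k \<le> s 0"
proof -
  have "s \<in> {..<n} \<rightarrow>\<^sub>E {0..<int N}" using s unfolding Decs_def Alls_def by blast
  then have "s k \<in> {0..<int N}" using k by blast
  moreover have "s (n - 1) \<le> s k"
  proof (cases "k = n - 1")
    case False
    then have "k < n - 1" using k by simp
    then show ?thesis using Decs_dec[OF s, of k "n - 1"] k by simp
  qed simp
  moreover have "s k \<le> s 0"
  proof (cases "k = 0")
    case False then show ?thesis using Decs_dec[OF s, of 0 k] k by simp
  qed simp
  ultimately show ?thesis by simp
qed

lemma Decs_restrict_I: assumes "\<And>k. k < n \<Longrightarrow> 0 \<le> f k \<and> f k < int N"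
  and "\<And>i j. i < j \<Longrightarrow> j < n \<Longrightarrow> f j < f i"
  shows "restrict f {..<n} \<in> Decs n N"
  unfolding Decs_def Alls_def using assms by (auto simp: restrict_PiE_iff)

lemma restrict_eq_Alls: assumes "s \<in> Alls n N" "\<And>k. k < n \<Longrightarrow> f k = s k"
  shows "restrict f {..<n} = s"
proof
  fix k show "restrict f {..<n} k = s k"
  proof (cases "k < n")
    case False then show ?thesis using Alls_out[OF assms(1) False] by simp
  qed (use assms in simp)
qed

lemma step_shift: assumes n: "n \<ge> 1"
  shows "(\<Sum>s\<in>{s \<in> Decs n N. s (n - 1) = 0}. real_of_int (int N - 1 - s 0) * DD n N mu s)
       = (\<Sum>t\<in>{s \<in> Decs n N. 0 \<notin> s ` {..<n}}. DD n N mu t)"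
proof -
  let ?Dz = "{s \<in> Decs n N. s (n - 1) = 0}"
  let ?Z = "{s \<in> Decs n N. 0 \<notin> s ` {..<n}}"
  let ?B = "\<lambda>s. {1..int N - 1 - s 0}"
  let ?sh = "\<lambda>s c. restrict (\<lambda>k. s k + c) {..<n}"
  have finDz: "finite ?Dz" by (rule finite_subset[OF _ finite_Alls[of n N]]) (auto simp: Decs_def)
  have "(\<Sum>s\<in>?Dz. real_of_int (int N - 1 - s 0) * DD n N mu s) = (\<Sum>s\<in>?Dz. \<Sum>c\<in>?B s. DD n N mu (?sh s c))"
  proof (rule sum.cong[OF refl])
    fix s assume "s \<in> ?Dz"
    then have s: "s \<in> Decs n N" by simp
    have "s 0 < int N" using Decs_bounds[OF s, of 0] n by simp
    then have "real_of_int (int N - 1 - s 0) = real (card (?B s))" by simp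
    moreover have "(\<Sum>c\<in>?B s. DD n N mu (?sh s c)) = (\<Sum>c\<in>?B s. DD n N mu s)"
      by (intro sum.cong refl DD_shift) simp
    ultimately show "real_of_int (int N - 1 - s 0) * DD n N mu s = (\<Sum>c\<in>?B s. DD n N mu (?sh s c))"
      by simp
  qed
  also have "\<dots> = (\<Sum>(s, c)\<in>Sigma ?Dz ?B. DD n N mu (?sh s c))"
    by (rule sum.Sigma[OF finDz]) simp
  also have "\<dots> = (\<Sum>t\<in>?Z. DD n N mu t)"
  proof (rule sum.reindex_bij_witness[where j="\<lambda>(s, c). ?sh s c" and i="\<lambda>t. (restrict (\<lambda>k. t k - t (n - 1)) {..<n}, t (n - 1))"])
    fix a assume a: "a \<in> Sigma ?Dz ?B"
    obtain s c where ac: "a = (s, c)" by fastforce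
    have s: "s \<in> Decs n N" "s (n - 1) = 0" and c: "1 \<le> c" "c \<le> int N - 1 - s 0" using a ac by auto
    have n1: "n - 1 < n" using n by simp
    have "restrict (\<lambda>k. ?sh s c k - ?sh s c (n - 1)) {..<n} = s"
      by (rule restrict_eq_Alls[OF Decs_Alls[OF s(1)]]) (use s(2) n1 in simp)
    then show "(restrict (\<lambda>k. (case a of (s, c) \<Rightarrow> ?sh s c) k - (case a of (s, c) \<Rightarrow> ?sh s c) (n - 1)) {..<n},
            (case a of (s, c) \<Rightarrow> ?sh s c) (n - 1)) = a"
      using ac s(2) n1 by simp
    have "?sh s c \<in> Decs n N"
    proof (rule Decs_restrict_I)
      fix k assume k: "k < n"
      show "0 \<le> s k + c \<and> s k + c < int N" using Decs_bounds[OF s(1) k] c by linarith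
    next
      fix i j assume "i < j" "j < n" then show "s j + c < s i + c" using Decs_dec[OF s(1)] by simp
    qed
    moreover have "0 \<notin> ?sh s c ` {..<n}"
    proof
      assume "0 \<in> ?sh s c ` {..<n}"
      then obtain k where k: "k < n" "s k + c = 0" by auto
      then show False using Decs_bounds[OF s(1) k(1)] c by linarith
    qed
    ultimately show "(case a of (s, c) \<Rightarrow> ?sh s c) \<in> ?Z" using ac by simp
    show "DD n N mu (case a of (s, c) \<Rightarrow> ?sh s c) = (case a of (s, c) \<Rightarrow> DD n N mu (?sh s c))"
      using ac by simp
  next
    fix b assume b: "b \<in> ?Z"
    then have bD: "b \<in> Decs n N" and b0: "0 \<notin> b ` {..<n}" by auto
    have n1: "n - 1 < n" using n by simp
    have bb: "0 \<le> b (n - 1)" "b (n - 1) < int N" "b 0 < int N" using Decs_bounds[OF bD n1] Decs_bounds[OF bD, of 0] n by auto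
    have "b (n - 1) \<noteq> 0" using b0 n1 by (metis imageI lessThan_iff)
    then have c1: "1 \<le> b (n - 1)" using bb by simp
    let ?s = "restrict (\<lambda>k. b k - b (n - 1)) {..<n}"
    show "(case (?s, b (n - 1)) of (s, c) \<Rightarrow> ?sh s c) = b"
      by simp (rule restrict_eq_Alls[OF Decs_Alls[OF bD]], simp)
    have "?s \<in> Decs n N"
    proof (rule Decs_restrict_I)
      fix k assume k: "k < n"
      show "0 \<le> b k - b (n - 1) \<and> b k - b (n - 1) < int N" using Decs_bounds[OF bD k] bb by linarith
    next
      fix i j assume "i < j" "j < n" then show "b j - b (n - 1) < b i - b (n - 1)" using Decs_dec[OF bD] by simp
    qed
    moreover have "?s (n - 1) = 0" using n1 by simp
    moreover have "b (n - 1) \<in> ?B ?s" using c1 bb n by simp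
    ultimately show "(?s, b (n - 1)) \<in> Sigma ?Dz ?B" by simp
  qed
  finally show ?thesis .
qed

theorem lemma8p5:
  fixes n \<kappa> :: nat and mu :: "nat \<Rightarrow> int"
  assumes "n \<ge> 1" and "\<kappa> \<ge> 1" and "mu \<in> rhoPkappa n \<kappa>"
  shows "(\<Sum>lam\<in>rhoPkappa n \<kappa>. real_of_int (gamma n \<kappa> lam) * (cmod (J n \<kappa> lam mu))\<^sup>2)
           = real \<kappa> * real (n + \<kappa>) ^ (n - 1)"
proof -
  define N where "N = n + \<kappa>"
  have n: "n \<ge> 1" using assms(1) .
  have N0: "N > 0" using n unfolding N_def by simp
  have n1: "n - 1 < n" using n by simp
  have mc: "(\<forall>i. n \<le> i \<longrightarrow> mu i = 0) \<and> mu (n - 1) = 0 \<and>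
     (\<forall>i<n. 0 \<le> mu i \<and> mu i < int N) \<and> (\<forall>i j. i < j \<and> j < n \<longrightarrow> mu j < mu i)"
    using assms(3) unfolding rhoP_char[OF n] N_def .
  have muok: "muok n N mu" unfolding muok_def using mc dec_inj[of n mu] by blast
  define ext where "ext = (\<lambda>s::nat \<Rightarrow> int. \<lambda>k. if k < n then s k else 0)"
  let ?Dz = "{s \<in> Decs n N. s (n - 1) = 0}"
  let ?Z = "{s \<in> Decs n N. 0 \<notin> s ` {..<n}}"
  have "(\<Sum>lam\<in>rhoPkappa n \<kappa>. real_of_int (gamma n \<kappa> lam) * (cmod (J n \<kappa> lam mu))\<^sup>2)
     = (\<Sum>lam\<in>rhoPkappa n \<kappa>. real_of_int (int N - 1 - lam 0) * DD n N mu lam)"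
  proof (rule sum.cong[OF refl])
    fix lam assume "lam \<in> rhoPkappa n \<kappa>"
    have "(cmod (J n \<kappa> lam mu))\<^sup>2 = DD n N mu lam" unfolding DD_def J_norm[OF n] N_def ..
    moreover have "gamma n \<kappa> lam = int N - 1 - lam 0" unfolding gamma_def N_def by simp
    ultimately show "real_of_int (gamma n \<kappa> lam) * (cmod (J n \<kappa> lam mu))\<^sup>2 = real_of_int (int N - 1 - lam 0) * DD n N mu lam"
      by simp
  qed
  also have "\<dots> = (\<Sum>s\<in>?Dz. real_of_int (int N - 1 - s 0) * DD n N mu s)"
  proof (rule sum.reindex_bij_witness[where i=ext and j="\<lambda>lam. restrict lam {..<n}"])
    fix a assume a: "a \<in> rhoPkappa n \<kappa>"
    have ac: "(\<forall>i. n \<le> i \<longrightarrow> a i = 0) \<and> a (n - 1) = 0 \<and>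
     (\<forall>i<n. 0 \<le> a i \<and> a i < int N) \<and> (\<forall>i j. i < j \<and> j < n \<longrightarrow> a j < a i)"
      using a unfolding rhoP_char[OF n] N_def .
    show "ext (restrict a {..<n}) = a"
    proof
      fix k show "ext (restrict a {..<n}) k = a k" unfolding ext_def using ac by auto
    qed
    have "restrict a {..<n} \<in> Decs n N"
      by (rule Decs_restrict_I) (use ac in auto)
    then show "restrict a {..<n} \<in> ?Dz" using ac n1 by simp
    have "DD n N mu (restrict a {..<n}) = DD n N mu a"
      unfolding DD_def by (subst SS_cong[of n "restrict a {..<n}" a]) auto
    then show "real_of_int (int N - 1 - restrict a {..<n} 0) * DD n N mu (restrict a {..<n}) =
          real_of_int (int N - 1 - a 0) * DD n N mu a" using n by simp
  next
    fix b assume b: "b \<in> ?Dz"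
    then have bD: "b \<in> Decs n N" and b0: "b (n - 1) = 0" by auto
    show "restrict (ext b) {..<n} = b"
      by (rule restrict_eq_Alls[OF Decs_Alls[OF bD]]) (simp add: ext_def)
    have "(\<forall>i. n \<le> i \<longrightarrow> ext b i = 0) \<and> ext b (n - 1) = 0 \<and>
     (\<forall>i<n. 0 \<le> ext b i \<and> ext b i < int (n + \<kappa>)) \<and> (\<forall>i j. i < j \<and> j < n \<longrightarrow> ext b j < ext b i)"
      using Decs_bounds[OF bD] Decs_dec[OF bD] b0 n1 unfolding ext_def N_def by auto
    then show "ext b \<in> rhoPkappa n \<kappa>" unfolding rhoP_char[OF n] .
  qed
  also have "\<dots> = (\<Sum>t\<in>?Z. DD n N mu t)" by (rule step_shift[OF n])
  also have "\<dots> = real N ^ n - real n * real N ^ (n - 1)" by (rule count_Z[OF N0 muok n])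
  also have "\<dots> = real \<kappa> * real (n + \<kappa>) ^ (n - 1)"
  proof -
    have "real N ^ n = real N * real N ^ (n - 1)" using n by (metis Suc_diff_1 less_le_trans zero_less_one power_Suc)
    then show ?thesis unfolding N_def by (simp add: algebra_simps)
  qed
  finally show ?thesis .
qed


end
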